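(* For every binary relation $S$ on $\Sigma^*$ there is an ECRPQ($S$) query $\phi(x,x')$ and a deterministic logarithmic-space algorithm that, given $R\in\mathsf{REG}_2$ over $\Sigma$, constructs a labeled graph $G$ and two nodes $v,v'$ such that $G\models\phi(v,v')$ if and only if $R\cap S\neq\emptyset$.
   Context: $\Sigma$ is a finite alphabet, $\Sigma_\bot=\Sigma\cup\{\bot\}$ with $\bot\notin\Sigma$. For $(w_1,\dots,w_n)\in(\Sigma^* )^n$, $w_1\otimes\cdots\otimes w_n$ is the word over $\Sigma_\bot^n$ of length $\max_i|w_i|$ whose $k$-th letter is the tuple of $k$-th letters of the $w_i$, with $\bot$ used when $|w_i|<k$. $\mathsf{REG}_n$ is the class of $R\subseteq(\Sigma^* )^n$ such that some NFA over $\Sigma_\bot^n$ accepts exactly $\{w_1\otimes\cdots\otimes w_n:(w_1,\dots,w_n)\in R\}$; they are given by such NFAs. The graph may be labeled over an alphabet extending $\Sigma$ (e.g. containing $\Sigma_\bot\times\Sigma_\bot$ and fresh symbols), and $S$ is regarded as a relation on words over this alphabet. Labeled graphs, paths, labels, and ECRPQ($S$) queries $\exists\bar y(\bigwedge_i(u_i\xrightarrow{\chi_i:L_i}u_i')\wedge\bigwedge_j R_j(\bar\chi_j)\wedge\bigwedge_{(i,j)\in I}S(\chi_i,\chi_j))$ (with $L_i$ regular languages and $R_j$ regular relations) are as usual: satisfaction requires nodes for $\bar y$ and paths $\rho_i$ from $u_i$ to $u_i'$ with label in $L_i$, such that label tuples satisfy every $R_j$ atom and every $S$ atom. *)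

theory Defs
  imports Complex_Main
begin

text \<open>An NFA over letters of type 'c: (initial states, final states, transitions).\<close>
type_synonym 'c nfa = "nat list \<times> nat list \<times> (nat \<times> 'c \<times> nat) list"

fun steps :: "(nat \<times> 'c \<times> nat) list \<Rightarrow> nat \<Rightarrow> 'c list \<Rightarrow> nat \<Rightarrow> bool" where
  "steps T p [] q = (p = q)"
| "steps T p (c # w) q = (\<exists>r. (p, c, r) \<in> set T \<and> steps T r w q)"

definition nfa_lang :: "'c nfa \<Rightarrow> 'c list set" where
  "nfa_lang A = (case A of (I, F, T) \<Rightarrow>
     {w. \<exists>p\<in>set I. \<exists>q\<in>set F. steps T p w q})"

text \<open>Letters of \<open>\<Sigma>_\<bottom>^n\<close> are lists of length n of options; \<open>None\<close> is \<open>\<bottom>\<close>.\<close>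
definition conv :: "'c list list \<Rightarrow> 'c option list list" where
  "conv ws = map (\<lambda>k. map (\<lambda>w. if k < length w then Some (w ! k) else None) ws)
                 [0..<foldr max (map length ws) 0]"

definition conv2 :: "'c list \<Rightarrow> 'c list \<Rightarrow> ('c option \<times> 'c option) list" where
  "conv2 u w = map (\<lambda>l. (l ! 0, l ! 1)) (conv [u, w])"

definition rel2 :: "('a option \<times> 'a option) nfa \<Rightarrow> ('a list \<times> 'a list) set" where
  "rel2 A = {(u, w). conv2 u w \<in> nfa_lang A}"

text \<open>Graph alphabet extending \<open>\<Sigma>\<close>: letters of \<open>\<Sigma>\<close>, letters of \<open>\<Sigma>_\<bottom>\<times>\<Sigma>_\<bottom>\<close>, and
  (countably many) fresh symbols.\<close>
datatype 'a lab = Base 'a | Pr "'a option" "'a option" | Fresh nat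

text \<open>A finite labeled graph: (nodes, labeled edges).\<close>
type_synonym 'b graph = "nat list \<times> (nat \<times> 'b \<times> nat) list"

definition wf_graph :: "'b graph \<Rightarrow> bool" where
  "wf_graph G = (\<forall>(p, b, q) \<in> set (snd G). p \<in> set (fst G) \<and> q \<in> set (fst G))"

definition gpath :: "'b graph \<Rightarrow> nat \<Rightarrow> 'b list \<Rightarrow> nat \<Rightarrow> bool" where
  "gpath G u w u' = steps (snd G) u w u'"

text \<open>An ECRPQ(S) query phi(x,x'): free variables x, x' (node variables are nats; all
  other variables are existentially quantified); path atoms \<open>u_i -\<chi>_i:L_i\<rightarrow> u_i'\<close>
  (the i-th atom introduces path variable \<open>\<chi>_i\<close>); regular relation atoms
  \<open>R_j(\<chi>_{j1},...,\<chi>_{jk})\<close> (NFA over \<open>\<Gamma>_\<bottom>^k\<close>, list of path-variable indices);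
  S atoms \<open>S(\<chi>_i,\<chi>_j)\<close> given by index pairs (i,j).\<close>
record 'b ecrpq =
  qx :: nat
  qx' :: nat
  patoms :: "(nat \<times> 'b nfa \<times> nat) list"
  ratoms :: "('b option list nfa \<times> nat list) list"
  satoms :: "(nat \<times> nat) list"

definition wf_query :: "'b ecrpq \<Rightarrow> bool" where
  "wf_query \<phi> =
     ((\<forall>(A, idx) \<in> set (ratoms \<phi>). \<forall>i \<in> set idx. i < length (patoms \<phi>)) \<and>
      (\<forall>(i, j) \<in> set (satoms \<phi>). i < length (patoms \<phi>) \<and> j < length (patoms \<phi>)))"

definition liftS :: "('a list \<times> 'a list) set \<Rightarrow> ('a lab list \<times> 'a lab list) set" where
  "liftS S = {(map Base u, map Base w) | u w. (u, w) \<in> S}"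

definition sat :: "('a list \<times> 'a list) set \<Rightarrow> 'a lab ecrpq \<Rightarrow> 'a lab graph \<Rightarrow> nat \<Rightarrow> nat \<Rightarrow> bool"
  where
  "sat S \<phi> G v v' =
    (\<exists>(\<nu> :: nat \<Rightarrow> nat) (ws :: 'a lab list list).
       \<nu> (qx \<phi>) = v \<and> \<nu> (qx' \<phi>) = v' \<and> (\<forall>y. \<nu> y \<in> set (fst G)) \<and>
       length ws = length (patoms \<phi>) \<and>
       (\<forall>i < length (patoms \<phi>). case patoms \<phi> ! i of (u, L, u') \<Rightarrow>
           gpath G (\<nu> u) (ws ! i) (\<nu> u') \<and> ws ! i \<in> nfa_lang L) \<and>
       (\<forall>(A, idx) \<in> set (ratoms \<phi>). conv (map (\<lambda>i. ws ! i) idx) \<in> nfa_lang A) \<and>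
       (\<forall>(i, j) \<in> set (satoms \<phi>). (ws ! i, ws ! j) \<in> liftS S))"

datatype 'a tok = TSym 'a | TBot | T0 | T1 | TEnd | TSep | TPr | TFr

fun bin :: "nat \<Rightarrow> 'a tok list" where
  "bin n = (if n = 0 then [] else bin (n div 2) @ [if odd n then T1 else T0])"

definition enc_nat :: "nat \<Rightarrow> 'a tok list" where
  "enc_nat n = bin n @ [TEnd]"

definition enc_nats :: "nat list \<Rightarrow> 'a tok list" where
  "enc_nats ns = concat (map enc_nat ns) @ [TSep]"

definition enc_opt :: "'a option \<Rightarrow> 'a tok list" where
  "enc_opt x = (case x of None \<Rightarrow> [TBot] | Some a \<Rightarrow> [TSym a])"

definition enc_in :: "('a option \<times> 'a option) nfa \<Rightarrow> 'a tok list" where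
  "enc_in A = (case A of (I, F, T) \<Rightarrow>
     enc_nats I @ enc_nats F @
     concat (map (\<lambda>(p, (x, y), q). enc_nat p @ enc_opt x @ enc_opt y @ enc_nat q) T) @ [TSep])"

fun enc_lab :: "'a lab \<Rightarrow> 'a tok list" where
  "enc_lab (Base a) = [TSym a]"
| "enc_lab (Pr x y) = TPr # enc_opt x @ enc_opt y"
| "enc_lab (Fresh n) = TFr # enc_nat n"

definition enc_out :: "'a lab graph \<Rightarrow> nat \<Rightarrow> nat \<Rightarrow> 'a tok list" where
  "enc_out G v v' =
     enc_nats (fst G) @
     concat (map (\<lambda>(p, b, q). enc_nat p @ enc_lab b @ enc_nat q) (snd G)) @ [TSep] @
     enc_nat v @ enc_nat v'"

text \<open>A deterministic transducer with a two-way read-only input tape (with endmarkers,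
  read as None), one two-way work tape over alphabet nat (blank 0), and a one-way
  write-only output tape.  M = (initial state, halting state, transition function);
  \<open>\<delta> q a s = (q', input move, symbol written, work move, output)\<close>.\<close>
type_synonym ('i, 'o) tm =
  "nat \<times> nat \<times> (nat \<Rightarrow> 'i option \<Rightarrow> nat \<Rightarrow> nat \<times> int \<times> nat \<times> int \<times> 'o option)"

text \<open>Configuration: (state, input head, work tape, work head, output written so far).\<close>
type_synonym 'o conf = "nat \<times> nat \<times> (nat \<Rightarrow> nat) \<times> nat \<times> 'o list"

definition tm_ok :: "('i, 'o) tm \<Rightarrow> bool" where
  "tm_ok M = (case M of (q0, qf, \<delta>) \<Rightarrow>
     (\<exists>k. q0 < k \<and> qf < k \<and>
        (\<forall>q a s. q < k \<longrightarrow> s < k \<longrightarrow>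
           (case \<delta> q a s of (q', dh, s', dp, _) \<Rightarrow>
              q' < k \<and> s' < k \<and> dh \<in> {-1, 0, 1} \<and> dp \<in> {-1, 0, 1}))))"

definition read_in :: "'i list \<Rightarrow> nat \<Rightarrow> 'i option" where
  "read_in w h = (if 1 \<le> h \<and> h \<le> length w then Some (w ! (h - 1)) else None)"

definition tm_step :: "('i, 'o) tm \<Rightarrow> 'i list \<Rightarrow> 'o conf \<Rightarrow> 'o conf" where
  "tm_step M w c = (case M of (q0, qf, \<delta>) \<Rightarrow> case c of (q, h, tape, p, out) \<Rightarrow>
     if q = qf then c else
     (case \<delta> q (read_in w h) (tape p) of (q', dh, s', dp, ot) \<Rightarrow>
        (q', min (nat (int h + dh)) (length w + 1), tape(p := s'), nat (int p + dp),
         out @ (case ot of None \<Rightarrow> [] | Some x \<Rightarrow> [x]))))"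

definition tm_conf :: "('i, 'o) tm \<Rightarrow> 'i list \<Rightarrow> nat \<Rightarrow> 'o conf" where
  "tm_conf M w t = (tm_step M w ^^ t) (fst M, 0, \<lambda>_. 0, 0, [])"

definition tm_computes :: "('i, 'o) tm \<Rightarrow> 'i list \<Rightarrow> 'o list \<Rightarrow> bool" where
  "tm_computes M w u = (\<exists>t. case tm_conf M w t of (q, h, tape, p, out) \<Rightarrow>
                          q = fst (snd M) \<and> out = u)"

text \<open>Work-tape head position (hence space used) is O(log n) on inputs of length n.\<close>
definition logspace :: "('i, 'o) tm \<Rightarrow> bool" where
  "logspace M = (tm_ok M \<and>
     (\<exists>c::nat. \<forall>w t. case tm_conf M w t of (q, h, tape, p, out) \<Rightarrow>
        real p \<le> real c * log 2 (real (length w + 2))))"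

end

theory Submission
  imports Defs
begin

definition alla :: "'a::finite list" where "alla = (SOME xs. set xs = UNIV)"

lemma set_alla[simp]: "set (alla::'a::finite list) = UNIV"
  unfolding alla_def by (rule someI_ex) (rule finite_list[OF finite_UNIV])

definition opts :: "'a::finite option list" where "opts = None # map Some alla"

lemma set_opts[simp]: "set (opts::'a::finite option list) = UNIV"
  unfolding opts_def by (auto, metis not_None_eq rangeI)

definition pairs :: "('a::finite option \<times> 'a option) list" where "pairs = List.product opts opts"

lemma set_pairs[simp]: "set (pairs::('a::finite option \<times> 'a option) list) = UNIV"
  unfolding pairs_def by auto

definition pr2 :: "'a option \<times> 'a option \<Rightarrow> 'a lab" where "pr2 xy = Pr (fst xy) (snd xy)"

definition loopnfa :: "'c list \<Rightarrow> 'c nfa" where "loopnfa cs = ([0],[0], map (\<lambda>c. (0,c,0)) cs)"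

lemma steps_loop: "steps (map (\<lambda>c. (0::nat,c,0::nat)) cs) 0 w 0 \<longleftrightarrow> set w \<subseteq> set cs"
  by (induction w) auto

lemma lang_loop: "nfa_lang (loopnfa cs) = {w. set w \<subseteq> set cs}"
  unfolding nfa_lang_def loopnfa_def using steps_loop by auto

definition LF :: "'a lab nfa" where "LF = ([0],[1],[(0, Fresh 0, 1)])"

lemma lang_LF: "nfa_lang LF = {[Fresh 0]}"
proof -
  have "steps [(0, Fresh 0, 1)] (0::nat) w 1 \<longleftrightarrow> w = [Fresh 0]" for w :: "'a lab list"
    by (cases w; auto; case_tac list; auto)
  then show ?thesis unfolding nfa_lang_def LF_def by auto
qed

definition LB :: "'a::finite lab nfa" where "LB = loopnfa (map Base alla)"
definition LP :: "'a::finite lab nfa" where "LP = loopnfa (map pr2 pairs)"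

definition rletters :: "'a::finite lab option list list" where
  "rletters = map (\<lambda>(x,y). [Some (Pr x y), map_option Base x, map_option Base y])
      (filter (\<lambda>(x,y). x \<noteq> None \<or> y \<noteq> None) pairs)"

lemma set_rletters: "c \<in> set rletters \<longleftrightarrow>
   (\<exists>x y. (x \<noteq> None \<or> y \<noteq> None) \<and> c = [Some (Pr x y), map_option Base x, map_option Base y])"
  unfolding rletters_def by auto

definition RN :: "'a::finite lab option list nfa" where "RN = loopnfa rletters"

definition phi :: "'a::finite lab ecrpq" where
  "phi = \<lparr>qx = 0, qx' = 1, patoms = [(0, LF, 2), (2, LP, 3), (3, LF, 1), (0, LB, 0), (0, LB, 0)],
          ratoms = [(RN, [1,3,4])], satoms = [(3,4)]\<rparr>"

lemma wf_phi: "wf_query phi"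
  unfolding wf_query_def phi_def by auto

definition nums :: "('a option \<times> 'a option) nfa \<Rightarrow> nat list" where
  "nums A = (case A of (I,F,T) \<Rightarrow> I @ F @ concat (map (\<lambda>(p,_,q). [p,q]) T))"

definition gedges :: "('a::finite option \<times> 'a option) nfa \<Rightarrow> (nat \<times> 'a lab \<times> nat) list" where
  "gedges A = (case A of (I,F,T) \<Rightarrow>
     map (\<lambda>a. (0, Base a, 0)) alla @ map (\<lambda>i. (0, Fresh 0, 2*i+1)) I @
     map (\<lambda>f. (2*f+1, Fresh 0, 2)) F @ map (\<lambda>(p,xy,q). (2*p+1, pr2 xy, 2*q+1)) T)"

definition gr :: "('a::finite option \<times> 'a option) nfa \<Rightarrow> 'a lab graph" where
  "gr A = (map (\<lambda>n. 2*n+1) (nums A) @ [0,2], gedges A)"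

lemma wf_gr: "wf_graph (gr A)"
  unfolding wf_graph_def gr_def gedges_def nums_def
  by (cases A) (force split: prod.splits)

definition nthopt :: "'c list \<Rightarrow> nat \<Rightarrow> 'c option" where
  "nthopt w k = (if k < length w then Some (w ! k) else None)"

lemma conv3_eq: "conv [a,b,c] = map (\<lambda>k. [nthopt a k, nthopt b k, nthopt c k])
    [0..<max (length a) (max (length b) (length c))]"
  by (simp add: conv_def nthopt_def)

lemma conv2_eq: "conv2 u v = map (\<lambda>k. (nthopt u k, nthopt v k)) [0..<max (length u) (length v)]"
  by (simp add: conv2_def conv_def nthopt_def)



lemma nthopt_map: "nthopt (map f u) k = map_option f (nthopt u k)"
  by (simp add: nthopt_def)

lemma conv_b:
  fixes b :: "'a::finite lab list"
  assumes "set (conv [b, map Base u, map Base v]) \<subseteq> set rletters"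
  shows "b = map pr2 (conv2 u v)"
proof -
  define L where "L = max (length b) (max (length u) (length v))"
  have H: "\<And>k. k < L \<Longrightarrow> nthopt b k = Some (Pr (nthopt u k) (nthopt v k)) \<and>
                         (k < length u \<or> k < length v)"
  proof -
    fix k assume k: "k < L"
    have "[nthopt b k, nthopt (map Base u) k, nthopt (map Base v) k] \<in> set rletters"
      using assms k unfolding conv3_eq L_def by auto
    then obtain x y where xy: "x \<noteq> None \<or> y \<noteq> None"
      "[nthopt b k, nthopt (map Base u) k, nthopt (map Base v) k] =
        [Some (Pr x y), map_option Base x, map_option Base y]"
      unfolding set_rletters by blast
    have inj: "inj (map_option (Base :: 'a \<Rightarrow> 'a lab))"
      by (simp add: inj_def option.inj_map_strong) (metis lab.inject(1) option.inj_map_strong)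
    have "x = nthopt u k" "y = nthopt v k"
      using xy(2) unfolding nthopt_map by (auto dest: injD[OF inj])
    then show "nthopt b k = Some (Pr (nthopt u k) (nthopt v k)) \<and> (k < length u \<or> k < length v)"
      using xy by (auto simp: nthopt_def split: if_splits)
  qed
  have lb: "length b = L"
  proof (cases "L = 0")
    case True then show ?thesis unfolding L_def by auto
  next
    case False
    then have "L - 1 < L" by auto
    from H[OF this] have "L - 1 < length b" by (auto simp: nthopt_def split: if_splits)
    then show ?thesis unfolding L_def by auto
  qed
  have luv: "max (length u) (length v) = L"
  proof (cases "L = 0")
    case True then show ?thesis unfolding L_def by auto
  next
    case False
    then have "L - 1 < L" by auto
    from H[OF this] have "L - 1 < length u \<or> L - 1 < length v" by auto
    then show ?thesis unfolding L_def by auto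
  qed
  show ?thesis
  proof (rule nth_equalityI)
    show "length b = length (map pr2 (conv2 u v))" using lb luv by (simp add: conv2_eq)
    fix k assume "k < length b"
    then have k: "k < L" using lb by simp
    from H[OF k] have "b ! k = Pr (nthopt u k) (nthopt v k)"
      using k lb by (simp add: nthopt_def split: if_splits)
    then show "b ! k = map pr2 (conv2 u v) ! k"
      using k luv by (simp add: conv2_eq pr2_def)
  qed
qed

lemma conv_good:
  "set (conv [map pr2 (conv2 u v), map Base u, map Base (v::'a::finite list)]) \<subseteq> set rletters"
proof
  fix c assume "c \<in> set (conv [map pr2 (conv2 u v), map Base u, map Base v])"
  then obtain k where k: "k < max (length u) (length v)"
    and c: "c = [nthopt (map pr2 (conv2 u v)) k, nthopt (map Base u) k, nthopt (map Base v) k]"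
    unfolding conv3_eq by (auto simp: conv2_eq)
  have "c = [Some (Pr (nthopt u k) (nthopt v k)), map_option Base (nthopt u k), map_option Base (nthopt v k)]"
    using k unfolding c nthopt_map by (simp add: nthopt_def conv2_eq pr2_def)
  moreover have "nthopt u k \<noteq> None \<or> nthopt v k \<noteq> None"
    using k by (auto simp: nthopt_def)
  ultimately show "c \<in> set rletters" unfolding set_rletters by blast
qed

lemma path_pr:
  "steps (gedges (I,F,T)) (2*p+1) (map pr2 \<pi>) (2*q+1) \<longleftrightarrow> steps T p \<pi> q"
proof (induction \<pi> arbitrary: p)
  case Nil then show ?case by simp
next
  case (Cons c \<pi>)
  have "(\<exists>r. (2*p+1, pr2 c, r) \<in> set (gedges (I,F,T)) \<and> steps (gedges (I,F,T)) r (map pr2 \<pi>) (2*q+1))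
     \<longleftrightarrow> (\<exists>r. (p, c, r) \<in> set T \<and> steps T r \<pi> q)"
  proof
    assume "\<exists>r. (2*p+1, pr2 c, r) \<in> set (gedges (I,F,T)) \<and> steps (gedges (I,F,T)) r (map pr2 \<pi>) (2*q+1)"
    then obtain r where r: "(2*p+1, pr2 c, r) \<in> set (gedges (I,F,T))"
      "steps (gedges (I,F,T)) r (map pr2 \<pi>) (2*q+1)" by blast
    from r(1) obtain r' where "r = 2*r'+1" "(p, c, r') \<in> set T"
      unfolding gedges_def by (auto simp: pr2_def prod_eq_iff)
    then show "\<exists>r. (p, c, r) \<in> set T \<and> steps T r \<pi> q" using r(2) Cons.IH by blast
  next
    assume "\<exists>r. (p, c, r) \<in> set T \<and> steps T r \<pi> q"
    then obtain r where r: "(p, c, r) \<in> set T" "steps T r \<pi> q" by blast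
    have "(2*p+1, pr2 c, 2*r+1) \<in> set (gedges (I,F,T))"
      unfolding gedges_def using r(1) by force
    then show "\<exists>r. (2*p+1, pr2 c, r) \<in> set (gedges (I,F,T)) \<and> steps (gedges (I,F,T)) r (map pr2 \<pi>) (2*q+1)"
      using r(2) Cons.IH by blast
  qed
  then show ?case by simp
qed

lemma path_base: "steps (gedges A) 0 (map Base u) 0"
proof (induction u)
  case Nil then show ?case by simp
next
  case (Cons a u)
  have "(0, Base a, 0) \<in> set (gedges A)" unfolding gedges_def by (cases A) auto
  then show ?case using Cons by auto
qed

lemma all5: "(\<forall>i<(5::nat). P i) \<longleftrightarrow> P 0 \<and> P 1 \<and> P 2 \<and> P 3 \<and> P 4"
  by (auto simp: less_Suc_eq numeral_eq_Suc)

lemma fresh_from0: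
  "steps (gedges (I,F,T)) 0 [Fresh 0] n \<Longrightarrow> \<exists>i\<in>set I. n = 2*i+1"
  unfolding gedges_def by (auto simp: pr2_def)

lemma fresh_to2:
  "steps (gedges (I,F,T)) n [Fresh 0] 2 \<Longrightarrow> \<exists>f\<in>set F. n = 2*f+1"
  unfolding gedges_def by (auto simp: pr2_def)

lemma phi_simps: "qx (phi::'a::finite lab ecrpq) = 0" "qx' (phi::'a lab ecrpq) = 1"
  "patoms (phi::'a lab ecrpq) = [(0, LF, 2), (2, LP, 3), (3, LF, 1), (0, LB, 0), (0, LB, 0)]"
  "ratoms (phi::'a lab ecrpq) = [(RN, [1,3,4])]" "satoms (phi::'a lab ecrpq) = [(3,4)]"
  by (simp_all add: phi_def)

lemma sat_phi: "sat S (phi::'a::finite lab ecrpq) G v v' \<longleftrightarrow>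
  (\<exists>(\<nu>::nat\<Rightarrow>nat) a b c d e. \<nu> 0 = v \<and> \<nu> 1 = v' \<and> (\<forall>y. \<nu> y \<in> set (fst G)) \<and>
     gpath G (\<nu> 0) a (\<nu> 2) \<and> a \<in> nfa_lang LF \<and> gpath G (\<nu> 2) b (\<nu> 3) \<and> b \<in> nfa_lang LP \<and>
     gpath G (\<nu> 3) c (\<nu> 1) \<and> c \<in> nfa_lang LF \<and> gpath G (\<nu> 0) d (\<nu> 0) \<and> d \<in> nfa_lang LB \<and>
     gpath G (\<nu> 0) e (\<nu> 0) \<and> e \<in> nfa_lang LB \<and> conv [b,d,e] \<in> nfa_lang RN \<and> (d,e) \<in> liftS S)"
  (is "?L \<longleftrightarrow> ?R")
proof
  assume ?L
  then obtain \<nu> :: "nat \<Rightarrow> nat" and ws :: "'a lab list list" where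
    nu: "\<nu> (qx (phi::'a lab ecrpq)) = v" "\<nu> (qx' (phi::'a lab ecrpq)) = v'" "\<forall>y. \<nu> y \<in> set (fst G)" and
    len0: "length ws = length (patoms (phi::'a lab ecrpq))" and
    P0: "\<forall>i<length (patoms (phi::'a lab ecrpq)). case patoms (phi::'a lab ecrpq) ! i of (u, L, u') \<Rightarrow>
         gpath G (\<nu> u) (ws ! i) (\<nu> u') \<and> ws ! i \<in> nfa_lang L" and
    R0: "\<forall>(A, idx) \<in> set (ratoms (phi::'a lab ecrpq)). conv (map (\<lambda>i. ws ! i) idx) \<in> nfa_lang A" and
    SS0: "\<forall>(i, j) \<in> set (satoms (phi::'a lab ecrpq)). (ws ! i, ws ! j) \<in> liftS S"
    unfolding sat_def by blast
  have l5: "length (patoms (phi::'a lab ecrpq)) = 5" by (simp add: phi_simps)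
  have len: "length ws = 5" using len0 l5 by simp
  have P: "\<forall>i<5. case patoms phi ! i of (u, L, u') \<Rightarrow>
         gpath G (\<nu> u) (ws ! i) (\<nu> u') \<and> ws ! i \<in> nfa_lang L" using P0 l5 by simp
  have R: "conv (map (\<lambda>i. ws ! i) [1,3,4]) \<in> nfa_lang RN" using R0 by (simp add: phi_simps)
  have SS: "(ws ! 3, ws ! 4) \<in> liftS S" using SS0 by (simp add: phi_simps)
  obtain a b c d e where ws: "ws = [a,b,c,d,e]"
    using len by (auto simp: numeral_eq_Suc length_Suc_conv)
  from P have "gpath G (\<nu> 0) a (\<nu> 2) \<and> a \<in> nfa_lang LF \<and> gpath G (\<nu> 2) b (\<nu> 3) \<and> b \<in> nfa_lang LP \<and>
     gpath G (\<nu> 3) c (\<nu> 1) \<and> c \<in> nfa_lang LF \<and> gpath G (\<nu> 0) d (\<nu> 0) \<and> d \<in> nfa_lang LB \<and>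
     gpath G (\<nu> 0) e (\<nu> 0) \<and> e \<in> nfa_lang LB"
    unfolding all5 phi_simps ws by simp
  moreover have "conv [b,d,e] \<in> nfa_lang RN" "(d,e) \<in> liftS S" using R SS ws by simp_all
  ultimately show ?R using nu unfolding phi_simps by blast
next
  assume ?R
  then obtain \<nu> :: "nat\<Rightarrow>nat" and a b c d e where H: "\<nu> 0 = v \<and> \<nu> 1 = v' \<and> (\<forall>y. \<nu> y \<in> set (fst G)) \<and>
     gpath G (\<nu> 0) a (\<nu> 2) \<and> a \<in> nfa_lang LF \<and> gpath G (\<nu> 2) b (\<nu> 3) \<and> b \<in> nfa_lang LP \<and>
     gpath G (\<nu> 3) c (\<nu> 1) \<and> c \<in> nfa_lang LF \<and> gpath G (\<nu> 0) d (\<nu> 0) \<and> d \<in> nfa_lang LB \<and>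
     gpath G (\<nu> 0) e (\<nu> 0) \<and> e \<in> nfa_lang LB \<and> conv [b,d,e] \<in> nfa_lang RN \<and> (d,e) \<in> liftS S"
    by blast
  have "length [a,b,c,d,e] = length (patoms (phi::'a lab ecrpq))" by (simp add: phi_simps)
  moreover have "\<forall>i<length (patoms (phi::'a lab ecrpq)). case patoms phi ! i of (u, L, u') \<Rightarrow>
         gpath G (\<nu> u) ([a,b,c,d,e] ! i) (\<nu> u') \<and> [a,b,c,d,e] ! i \<in> nfa_lang L"
  proof -
    have l5: "length (patoms (phi::'a lab ecrpq)) = 5" by (simp add: phi_simps)
    have HH: "gpath G (\<nu> 0) a (\<nu> 2)" "a \<in> nfa_lang LF" "gpath G (\<nu> 2) b (\<nu> 3)" "b \<in> nfa_lang LP"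
     "gpath G (\<nu> 3) c (\<nu> 1)" "c \<in> nfa_lang LF" "gpath G (\<nu> 0) d (\<nu> 0)" "d \<in> nfa_lang LB"
     "gpath G (\<nu> 0) e (\<nu> 0)" "e \<in> nfa_lang LB" using H by blast+
    show ?thesis unfolding l5 unfolding all5 unfolding phi_simps using HH by simp
  qed
  ultimately show ?L unfolding sat_def using H
    by (intro exI[of _ \<nu>] exI[of _ "[a,b,c,d,e]"]) (simp add: phi_simps)
qed

lemma sat_gr:
  fixes A :: "('a::finite option \<times> 'a option) nfa"
  shows "sat S phi (gr A) 0 2 \<longleftrightarrow> rel2 A \<inter> S \<noteq> {}"
proof (cases A)
  case (fields I F T)
  show ?thesis
  proof
    assume "sat S phi (gr A) 0 2"
    then obtain \<nu> :: "nat \<Rightarrow> nat" and a b c d e where H: "\<nu> 0 = 0" "\<nu> 1 = 2"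
       "gpath (gr A) (\<nu> 0) a (\<nu> 2)" "a \<in> nfa_lang LF" "gpath (gr A) (\<nu> 2) b (\<nu> 3)"
       "gpath (gr A) (\<nu> 3) c (\<nu> 1)" "c \<in> nfa_lang LF"
       "conv [b,d,e] \<in> nfa_lang RN" "(d,e) \<in> liftS S"
      using \<open>sat S phi (gr A) 0 2\<close> unfolding sat_phi by (elim exE conjE) blast
    have nu: "\<nu> 0 = 0" "\<nu> 1 = 2" using H by auto
    have P0: "steps (gedges A) 0 a (\<nu> 2)" "a = [Fresh 0]"
      using H(1,3,4) by (auto simp: gpath_def gr_def lang_LF)
    have P1: "steps (gedges A) (\<nu> 2) b (\<nu> 3)" using H(5) by (simp add: gpath_def gr_def)
    have P2': "steps (gedges A) (\<nu> 3) c (\<nu> 1)" "c = [Fresh 0]"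
      using H(6,7) by (auto simp: gpath_def gr_def lang_LF)
    have R: "conv [b,d,e] \<in> nfa_lang RN" and SS: "(d,e) \<in> liftS S" using H by auto
    have P2: "steps (gedges A) (\<nu> 3) c 2" using P2' nu(2) by simp
    obtain u v where uv: "(u, v) \<in> S" "d = map Base u" "e = map Base v"
      using SS unfolding liftS_def by auto
    have b: "b = map pr2 (conv2 u v)"
      using R by (intro conv_b) (auto simp: RN_def lang_loop uv)
    obtain i where i: "i \<in> set I" "\<nu> 2 = 2*i+1" using fresh_from0[of I F T] P0 fields by auto
    obtain f where f: "f \<in> set F" "\<nu> 3 = 2*f+1" using fresh_to2[of I F T] P2 P2'(2) fields by auto
    have "steps T i (conv2 u v) f"
      using P1 unfolding i f b fields path_pr .
    then have "(u, v) \<in> rel2 A" unfolding rel2_def nfa_lang_def fields using i f by auto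
    then show "rel2 A \<inter> S \<noteq> {}" using uv by auto
  next
    assume "rel2 A \<inter> S \<noteq> {}"
    then obtain u v where uv: "(u, v) \<in> S" "(u, v) \<in> rel2 A" by auto
    then obtain i f where i: "i \<in> set I" and f: "f \<in> set F" and st: "steps T i (conv2 u v) f"
      unfolding rel2_def nfa_lang_def fields by auto
    define \<nu> where "\<nu> = (\<lambda>n::nat. if n = 1 then 2 else if n = 2 then 2*i+1 else if n = 3 then 2*f+1 else (0::nat))"
    have nodes: "\<forall>y. \<nu> y \<in> set (fst (gr A))"
      unfolding \<nu>_def gr_def nums_def fields using i f by auto
    have e1: "(0, Fresh 0, 2*i+1) \<in> set (gedges A)" unfolding gedges_def fields using i by auto
    have e2: "(2*f+1, Fresh 0, 2) \<in> set (gedges A)" unfolding gedges_def fields using f by auto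
    have pth: "steps (gedges A) (2*i+1) (map pr2 (conv2 u v)) (2*f+1)"
      unfolding fields path_pr by (rule st)
    have n: "\<nu> 0 = 0" "\<nu> 1 = 2" "\<nu> 2 = 2*i+1" "\<nu> 3 = 2*f+1" by (simp_all add: \<nu>_def)
    show "sat S phi (gr A) 0 2"
      unfolding sat_phi
      apply (rule exI[of _ \<nu>], rule exI[of _ "[Fresh 0]"], rule exI[of _ "map pr2 (conv2 u v)"],
         rule exI[of _ "[Fresh 0]"], rule exI[of _ "map Base u"], rule exI[of _ "map Base v"])
      unfolding n
      using nodes e1 e2 pth path_base[of A u] path_base[of A v] conv_good[of u v] uv(1)
      by (auto simp: gpath_def gr_def lang_LF LP_def LB_def RN_def lang_loop liftS_def)
  qed
qed



declare bin.simps[simp del]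

lemma bin0[simp]: "bin 0 = []" by (simp add: bin.simps)
lemma bin_2n1: "bin (2*n+1) = bin n @ [T1]" by (subst bin.simps) simp
lemma bin1: "bin 1 = [T1]" using bin_2n1[of 0] by (metis One_nat_def append_Nil bin0 mult_0_right add_0)
lemma bin2: "bin 2 = [T1, T0]" by (subst bin.simps) (simp add: bin1 bin1[unfolded One_nat_def])
lemma bin_digits: "set (bin n) \<subseteq> {T0, T1}"
proof (induction n rule: bin.induct)
  case (1 n) then show ?case by (subst bin.simps) auto
qed

datatype mode = P0 | P1 | Rw | MI | MIn | MF | MT | MTx | MTy | MTq | Halt

lemma UNIV_mode: "(UNIV :: mode set) = {P0, P1, Rw, MI, MIn, MF, MT, MTx, MTy, MTq, Halt}"
  by (auto; case_tac x; auto)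

lemma finite_mode: "finite (UNIV :: mode set)" by (simp add: UNIV_mode)

lemma UNIV_tok: "(UNIV :: 'a tok set) = range TSym \<union> {TBot, T0, T1, TEnd, TSep, TPr, TFr}"
  by (auto; case_tac x; auto)

lemma finite_tok: "finite (UNIV :: 'a::finite tok set)" by (simp add: UNIV_tok)

definition BL :: "'a::finite tok list" where "BL = concat (map (\<lambda>a. [TEnd, TSym a, TEnd]) alla)"

definition out1 :: "'a tok \<Rightarrow> 'a tok list" where
  "out1 t = (case t of T0 \<Rightarrow> [T0] | T1 \<Rightarrow> [T1] | TEnd \<Rightarrow> [T1,TEnd] | _ \<Rightarrow> [])"

definition isdig :: "'a tok \<Rightarrow> bool" where "isdig t \<longleftrightarrow> t = T0 \<or> t = T1"
definition isopt :: "'a tok \<Rightarrow> bool" where "isopt t \<longleftrightarrow> t = TBot \<or> (\<exists>a. t = TSym a)"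

definition act :: "mode \<Rightarrow> 'a::finite tok option \<Rightarrow> mode \<times> int \<times> 'a tok list" where
  "act m a = (case m of
     P0 \<Rightarrow> (P1, 1, [])
   | P1 \<Rightarrow> (case a of None \<Rightarrow> (Rw, -1, [TEnd, T1, T0, TEnd, TSep] @ BL) | Some t \<Rightarrow> (P1, 1, out1 t))
   | Rw \<Rightarrow> (case a of None \<Rightarrow> (MI, 1, []) | Some t \<Rightarrow> (Rw, -1, []))
   | MI \<Rightarrow> (case a of None \<Rightarrow> (Halt, 0, []) | Some t \<Rightarrow>
        if t = TSep then (MF, 1, []) else if t = TEnd then (MI, 1, [TEnd,TFr,TEnd,T1,TEnd])
        else if isdig t then (MIn, 1, [TEnd,TFr,TEnd,t]) else (Halt, 0, []))
   | MIn \<Rightarrow> (case a of None \<Rightarrow> (Halt, 0, []) | Some t \<Rightarrow>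
        if t = TEnd then (MI, 1, [T1,TEnd]) else if isdig t then (MIn, 1, [t]) else (Halt, 0, []))
   | MF \<Rightarrow> (case a of None \<Rightarrow> (Halt, 0, []) | Some t \<Rightarrow>
        if t = TSep then (MT, 1, []) else if t = TEnd then (MF, 1, [T1,TEnd,TFr,TEnd,T1,T0,TEnd])
        else if isdig t then (MF, 1, [t]) else (Halt, 0, []))
   | MT \<Rightarrow> (case a of None \<Rightarrow> (Halt, 0, []) | Some t \<Rightarrow>
        if t = TSep then (Halt, 1, [TSep,TEnd,T1,T0,TEnd]) else if t = TEnd then (MTx, 1, [T1,TEnd,TPr])
        else if isdig t then (MT, 1, [t]) else (Halt, 0, []))
   | MTx \<Rightarrow> (case a of None \<Rightarrow> (Halt, 0, []) | Some t \<Rightarrow>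
        if isopt t then (MTy, 1, [t]) else (Halt, 0, []))
   | MTy \<Rightarrow> (case a of None \<Rightarrow> (Halt, 0, []) | Some t \<Rightarrow>
        if isopt t then (MTq, 1, [t]) else (Halt, 0, []))
   | MTq \<Rightarrow> (case a of None \<Rightarrow> (Halt, 0, []) | Some t \<Rightarrow>
        if t = TEnd then (MT, 1, [T1,TEnd]) else if isdig t then (MTq, 1, [t]) else (Halt, 0, []))
   | Halt \<Rightarrow> (Halt, 0, []))"

lemma act_dh: "fst (snd (act m a)) \<in> {-1, 0, 1}"
  unfolding act_def by (simp split: mode.splits option.splits)

lemma out1_len: "length (out1 t) \<le> 2" by (cases t) (simp_all add: out1_def)

lemma act_len: "length (snd (snd (act m (a :: 'a::finite tok option)))) \<le> 7 + length (BL :: 'a tok list)"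
  unfolding act_def by (simp split: mode.splits option.splits add: order_trans[OF out1_len])

type_synonym 'a aconf = "(mode \<times> 'a tok list) \<times> nat \<times> 'a tok list"

definition astep :: "'a::finite tok list \<Rightarrow> 'a aconf \<Rightarrow> 'a aconf" where
  "astep w c = (case c of ((m, pd), h, out) \<Rightarrow>
     if m = Halt \<and> pd = [] then c
     else if pd \<noteq> [] then ((m, tl pd), min h (length w + 1), out @ [hd pd])
     else (case act m (read_in w h) of (m', dh, pd') \<Rightarrow>
             ((m', pd'), min (nat (int h + dh)) (length w + 1), out)))"

definition areach :: "'a::finite tok list \<Rightarrow> 'a aconf \<Rightarrow> 'a aconf \<Rightarrow> bool" where
  "areach w c c' \<longleftrightarrow> (\<exists>n. (astep w ^^ n) c = c')"

lemma areach_refl: "areach w c c" unfolding areach_def by (rule exI[of _ 0]) simp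

lemma areach_trans: "areach w a b \<Longrightarrow> areach w b c \<Longrightarrow> areach w a c"
  unfolding areach_def by (metis funpow_add comp_apply)

lemma areach_step: "astep w a = b \<Longrightarrow> areach w a b"
  unfolding areach_def by (rule exI[of _ 1]) simp

lemma emit: "h \<le> length w + 1 \<Longrightarrow> areach w ((m, pd), h, out) ((m, []), h, out @ pd)"
proof (induction pd arbitrary: out)
  case Nil then show ?case by (simp add: areach_refl)
next
  case (Cons x pd)
  have "astep w ((m, x # pd), h, out) = ((m, pd), h, out @ [x])"
    using Cons.prems by (simp add: astep_def)
  moreover have "areach w ((m, pd), h, out @ [x]) ((m, []), h, (out @ [x]) @ pd)"
    by (rule Cons.IH[OF Cons.prems])
  ultimately have "areach w ((m, x # pd), h, out) ((m, []), h, (out @ [x]) @ pd)"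
    by (rule areach_trans[OF areach_step])
  then show ?case by simp
qed

lemma read_at: "w = pre @ t # post \<Longrightarrow> read_in w (length pre + 1) = Some t"
  by (simp add: read_in_def nth_append)

lemma rd:
  assumes "w = pre @ t # post" "h = length pre + 1" "m \<noteq> Halt" "act m (Some t) = (m', 1, pd)"
    "h' = h + 1" "out' = out @ pd"
  shows "areach w ((m,[]),h,out) ((m',[]), h', out')"
proof -
  have "astep w ((m,[]),h,out) = ((m', pd), h + 1, out)"
    using assms(1-4) read_at[OF assms(1)] by (simp add: astep_def)
  moreover have "h + 1 \<le> length w + 1" using assms(1,2) by simp
  ultimately have "areach w ((m,[]),h,out) ((m',[]), h + 1, out @ pd)"
    by (rule areach_trans[OF areach_step emit])
  then show ?thesis using assms(5,6) by simp
qed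

lemma sq:
  assumes "\<And>t. t \<in> set seg \<Longrightarrow> act m (Some t) = (m, 1, f t)" "m \<noteq> Halt"
    "w = pre @ seg @ post" "h = length pre + 1" "h' = length pre + length seg + 1"
    "out' = out @ concat (map f seg)"
  shows "areach w ((m,[]), h, out) ((m,[]), h', out')"
  using assms
proof (induction seg arbitrary: pre h out)
  case Nil then show ?case by (simp add: areach_refl)
next
  case (Cons t seg)
  have 1: "areach w ((m,[]),h,out) ((m,[]), h+1, out @ f t)"
    by (rule rd[of w pre t "seg @ post"]) (use Cons.prems in auto)
  have 2: "areach w ((m,[]), h+1, out @ f t) ((m,[]), h', out')"
    by (rule Cons.IH[of "pre @ [t]"]) (use Cons.prems in auto)
  show ?case using 1 2 by (rule areach_trans)
qed

lemma digits:
  fixes w :: "'a::finite tok list"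
  assumes "m \<in> {MIn, MF, MT, MTq}" "w = pre @ bin n @ post" "h = length pre + 1"
    "h' = length pre + length (bin n :: 'a tok list) + 1" "out' = out @ bin n"
  shows "areach w ((m,[]), h, out) ((m,[]), h', out')"
proof (rule sq[where f = "\<lambda>d. [d]"])
  fix t :: "'a tok" assume "t \<in> set (bin n)"
  then have "t = T0 \<or> t = T1" using bin_digits by auto
  then show "act m (Some t) = (m, 1, [t])" using assms(1) by (auto simp: act_def isdig_def)
qed (use assms in auto)

lemma rewind:
  assumes "h \<le> length w"
  shows "areach w ((Rw,[]), h, out) ((Rw,[]), 0, out)"
  using assms
proof (induction h)
  case 0 show ?case by (rule areach_refl)
next
  case (Suc k)
  have "read_in w (Suc k) = Some (w ! k)" using Suc.prems by (simp add: read_in_def)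
  then have "astep w ((Rw,[]), Suc k, out) = ((Rw,[]), k, out)"
    using Suc.prems by (simp add: astep_def act_def)
  moreover have "areach w ((Rw,[]), k, out) ((Rw,[]), 0, out)" using Suc by simp
  ultimately show ?case by (rule areach_trans[OF areach_step])
qed



lemma dig_act: "t \<in> {T0, T1} \<Longrightarrow> m \<in> {MIn, MF, MT, MTq} \<Longrightarrow> act m (Some t) = (m, 1, [t])"
  by (auto simp: act_def isdig_def)

lemma dseq:
  fixes w :: "'a::finite tok list"
  assumes "set ds \<subseteq> {T0, T1}" "m \<in> {MIn, MF, MT, MTq}" "w = pre @ ds @ post" "h = length pre + 1"
    "h' = length pre + length ds + 1" "out' = out @ ds"
  shows "areach w ((m,[]), h, out) ((m,[]), h', out')"
proof (rule sq[where f = "\<lambda>d. [d]"])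
  fix t :: "'a tok" assume "t \<in> set ds"
  then show "act m (Some t) = (m, 1, [t])" using assms(1,2) dig_act by blast
qed (use assms in auto)

definition Iout :: "nat \<Rightarrow> 'a tok list" where "Iout i = [TEnd,TFr,TEnd] @ bin i @ [T1,TEnd]"
definition Fout :: "nat \<Rightarrow> 'a tok list" where "Fout f = bin f @ [T1,TEnd,TFr,TEnd,T1,T0,TEnd]"
definition Tout :: "nat \<times> ('a option \<times> 'a option) \<times> nat \<Rightarrow> 'a tok list" where
  "Tout tr = (case tr of (p,(x,y),q) \<Rightarrow> bin p @ [T1,TEnd,TPr] @ enc_opt x @ enc_opt y @ bin q @ [T1,TEnd])"
definition Tin :: "nat \<times> ('a option \<times> 'a option) \<times> nat \<Rightarrow> 'a tok list" where
  "Tin tr = (case tr of (p,(x,y),q) \<Rightarrow> enc_nat p @ enc_opt x @ enc_opt y @ enc_nat q)"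

lemma numI:
  fixes w :: "'a::finite tok list"
  assumes "w = pre @ enc_nat i @ post" "h = length pre + 1"
    "h' = length pre + length (enc_nat i :: 'a tok list) + 1" "out' = out @ Iout i"
  shows "areach w ((MI,[]),h,out) ((MI,[]),h',out')"
proof (cases "bin i :: 'a tok list")
  case Nil
  show ?thesis
    by (rule rd[of w pre TEnd post]) (use assms Nil in \<open>auto simp: enc_nat_def act_def Iout_def\<close>)
next
  case (Cons d ds)
  have bd: "set (bin i :: 'a tok list) \<subseteq> {T0, T1}" by (rule bin_digits)
  have dd: "d \<in> {T0, T1}" "set ds \<subseteq> {T0, T1}" using bd Cons by auto
  have w: "w = pre @ d # (ds @ TEnd # post)" using assms(1) Cons by (simp add: enc_nat_def)
  have s1: "areach w ((MI,[]),h,out) ((MIn,[]),h+1,out @ [TEnd,TFr,TEnd,d])"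
    by (rule rd[OF w assms(2)]) (use dd in \<open>auto simp: act_def isdig_def\<close>)
  have s2: "areach w ((MIn,[]),h+1,out @ [TEnd,TFr,TEnd,d]) ((MIn,[]),h+1+length ds,out @ [TEnd,TFr,TEnd,d] @ ds)"
    by (rule dseq[of ds MIn w "pre @ [d]" "TEnd # post"]) (use dd w assms(2) in auto)
  have s3: "areach w ((MIn,[]),h+1+length ds,out @ [TEnd,TFr,TEnd,d] @ ds) ((MI,[]),h',out')"
    by (rule rd[of w "pre @ d # ds" TEnd post]) (use w assms Cons in \<open>auto simp: act_def Iout_def enc_nat_def\<close>)
  show ?thesis by (rule areach_trans[OF s1 areach_trans[OF s2 s3]])
qed

lemma numsI:
  fixes w :: "'a::finite tok list"
  assumes "w = pre @ concat (map enc_nat I) @ post" "h = length pre + 1"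
    "h' = length pre + length (concat (map enc_nat I) :: 'a tok list) + 1" "out' = out @ concat (map Iout I)"
  shows "areach w ((MI,[]),h,out) ((MI,[]),h',out')"
  using assms
proof (induction I arbitrary: pre h out)
  case Nil then show ?case by (simp add: areach_refl)
next
  case (Cons i I)
  have s1: "areach w ((MI,[]),h,out) ((MI,[]),h + length (enc_nat i :: 'a tok list), out @ Iout i)"
    by (rule numI[of w pre i]) (use Cons.prems in auto)
  have s2: "areach w ((MI,[]),h + length (enc_nat i :: 'a tok list), out @ Iout i) ((MI,[]),h',out')"
    by (rule Cons.IH[of "pre @ enc_nat i"]) (use Cons.prems in auto)
  show ?case by (rule areach_trans[OF s1 s2])
qed

lemma numF:
  fixes w :: "'a::finite tok list"
  assumes "w = pre @ enc_nat f @ post" "h = length pre + 1"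
    "h' = length pre + length (enc_nat f :: 'a tok list) + 1" "out' = out @ Fout f"
  shows "areach w ((MF,[]),h,out) ((MF,[]),h',out')"
proof -
  have w: "w = pre @ bin f @ (TEnd # post)" using assms(1) by (simp add: enc_nat_def)
  have s1: "areach w ((MF,[]),h,out) ((MF,[]),h + length (bin f :: 'a tok list),out @ bin f)"
    by (rule digits[OF _ w assms(2)]) (use assms(2) in auto)
  have s2: "areach w ((MF,[]),h + length (bin f :: 'a tok list),out @ bin f) ((MF,[]),h',out')"
    by (rule rd[of w "pre @ bin f" TEnd post]) (use w assms in \<open>auto simp: act_def Fout_def enc_nat_def\<close>)
  show ?thesis by (rule areach_trans[OF s1 s2])
qed

lemma numsF:
  fixes w :: "'a::finite tok list"
  assumes "w = pre @ concat (map enc_nat F) @ post" "h = length pre + 1"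
    "h' = length pre + length (concat (map enc_nat F) :: 'a tok list) + 1" "out' = out @ concat (map Fout F)"
  shows "areach w ((MF,[]),h,out) ((MF,[]),h',out')"
  using assms
proof (induction F arbitrary: pre h out)
  case Nil then show ?case by (simp add: areach_refl)
next
  case (Cons i I)
  have s1: "areach w ((MF,[]),h,out) ((MF,[]),h + length (enc_nat i :: 'a tok list), out @ Fout i)"
    by (rule numF[of w pre i]) (use Cons.prems in auto)
  have s2: "areach w ((MF,[]),h + length (enc_nat i :: 'a tok list), out @ Fout i) ((MF,[]),h',out')"
    by (rule Cons.IH[of "pre @ enc_nat i"]) (use Cons.prems in auto)
  show ?case by (rule areach_trans[OF s1 s2])
qed

lemma opt_act: "m = MTx \<and> m' = MTy \<or> m = MTy \<and> m' = MTq \<Longrightarrow>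
   act m (Some (hd (enc_opt x))) = (m', 1, enc_opt x) \<and> enc_opt x = [hd (enc_opt x)]"
  by (cases x) (auto simp: act_def isopt_def enc_opt_def)

lemma trn:
  fixes w :: "'a::finite tok list"
  assumes "w = pre @ Tin tr @ post" "h = length pre + 1"
    "h' = length pre + length (Tin tr :: 'a tok list) + 1" "out' = out @ Tout tr"
  shows "areach w ((MT,[]),h,out) ((MT,[]),h',out')"
proof -
  obtain p x y q where tr: "tr = (p,(x,y),q)" by (cases tr) auto
  obtain a where a: "enc_opt x = [a]" "act MTx (Some a) = (MTy, 1, [a])"
    using opt_act[of MTx MTy x] by auto
  obtain b where b: "enc_opt y = [b]" "act MTy (Some b) = (MTq, 1, [b])"
    using opt_act[of MTy MTq y] by auto
  have w: "w = pre @ bin p @ TEnd # a # b # bin q @ TEnd # post"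
    using assms(1) tr a b by (simp add: Tin_def enc_nat_def)
  let ?o1 = "out @ bin p"
  let ?h1 = "h + length (bin p :: 'a tok list)"
  have s1: "areach w ((MT,[]),h,out) ((MT,[]),?h1,?o1)"
    by (rule digits[OF _ w assms(2)]) (use assms(2) in auto)
  have s2: "areach w ((MT,[]),?h1,?o1) ((MTx,[]),?h1+1,?o1 @ [T1,TEnd,TPr])"
    by (rule rd[of w "pre @ bin p" TEnd]) (use w assms(2) in \<open>auto simp: act_def\<close>)
  have s3: "areach w ((MTx,[]),?h1+1,?o1 @ [T1,TEnd,TPr]) ((MTy,[]),?h1+2,?o1 @ [T1,TEnd,TPr,a])"
    by (rule rd[of w "pre @ bin p @ [TEnd]" a]) (use w assms(2) a in auto)
  have s4: "areach w ((MTy,[]),?h1+2,?o1 @ [T1,TEnd,TPr,a]) ((MTq,[]),?h1+3,?o1 @ [T1,TEnd,TPr,a,b])"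
    by (rule rd[of w "pre @ bin p @ [TEnd, a]" b]) (use w assms(2) b in auto)
  have s5: "areach w ((MTq,[]),?h1+3,?o1 @ [T1,TEnd,TPr,a,b]) ((MTq,[]),?h1+3+length (bin q :: 'a tok list),?o1 @ [T1,TEnd,TPr,a,b] @ bin q)"
    by (rule digits[of MTq w "pre @ bin p @ [TEnd, a, b]" q "TEnd # post"]) (use w assms(2) in auto)
  have s6: "areach w ((MTq,[]),?h1+3+length (bin q :: 'a tok list),?o1 @ [T1,TEnd,TPr,a,b] @ bin q) ((MT,[]),h',out')"
    by (rule rd[of w "pre @ bin p @ [TEnd, a, b] @ bin q" TEnd post])
       (use w assms a b tr in \<open>auto simp: act_def Tout_def Tin_def enc_nat_def\<close>)
  show ?thesis by (rule areach_trans[OF s1 areach_trans[OF s2 areach_trans[OF s3 areach_trans[OF s4 areach_trans[OF s5 s6]]]]])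
qed

lemma trns:
  fixes w :: "'a::finite tok list"
  assumes "w = pre @ concat (map Tin T) @ post" "h = length pre + 1"
    "h' = length pre + length (concat (map Tin T) :: 'a tok list) + 1" "out' = out @ concat (map Tout T)"
  shows "areach w ((MT,[]),h,out) ((MT,[]),h',out')"
  using assms
proof (induction T arbitrary: pre h out)
  case Nil then show ?case by (simp add: areach_refl)
next
  case (Cons i I)
  have s1: "areach w ((MT,[]),h,out) ((MT,[]),h + length (Tin i :: 'a tok list), out @ Tout i)"
    by (rule trn[of w pre i]) (use Cons.prems in auto)
  have s2: "areach w ((MT,[]),h + length (Tin i :: 'a tok list), out @ Tout i) ((MT,[]),h',out')"
    by (rule Cons.IH[of "pre @ Tin i"]) (use Cons.prems in auto)
  show ?case by (rule areach_trans[OF s1 s2])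
qed



lemma bin_2n1': "bin (Suc (2*n)) = bin n @ [T1]" using bin_2n1[of n] by simp

lemma enc_in_split: "enc_in (I,F,T) = concat (map enc_nat I) @ [TSep] @ concat (map enc_nat F) @ [TSep]
   @ concat (map Tin T) @ [TSep]"
proof -
  have "(\<lambda>(p,(x,y),q). enc_nat p @ enc_opt x @ enc_opt y @ enc_nat q) = (Tin :: _ \<Rightarrow> 'a tok list)"
    by (rule ext) (auto simp: Tin_def split: prod.splits)
  then show ?thesis by (simp add: enc_in_def enc_nats_def)
qed

definition tail1 :: "'a::finite tok list" where "tail1 = [TEnd, T1, T0, TEnd, TSep] @ BL"

lemma arun:
  fixes A :: "('a::finite option \<times> 'a option) nfa"
  assumes A: "A = (I,F,T)"
  shows "areach (enc_in A) ((P0,[]),0,[]) ((Halt,[]), length (enc_in A) + 1,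
    concat (map out1 (enc_in A)) @ tail1 @ concat (map Iout I) @ concat (map Fout F)
      @ concat (map Tout T) @ [TSep,TEnd,T1,T0,TEnd])"
proof -
  define w where "w = enc_in A"
  define CI :: "'a tok list" where "CI = concat (map enc_nat I)"
  define CF :: "'a tok list" where "CF = concat (map enc_nat F)"
  define CT :: "'a tok list" where "CT = concat (map Tin T)"
  have w: "w = CI @ [TSep] @ CF @ [TSep] @ CT @ [TSep]"
    unfolding w_def A CI_def CF_def CT_def by (rule enc_in_split)
  define L where "L = length w"
  define o1 where "o1 = concat (map out1 w)"
  define o2 where "o2 = o1 @ tail1"
  define o3 where "o3 = o2 @ concat (map Iout I)"
  define o4 where "o4 = o3 @ concat (map Fout F)"
  define o5 where "o5 = o4 @ concat (map Tout T)"
  have s0: "areach w ((P0,[]),0,[]) ((P1,[]),1,[])"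
    by (rule areach_step) (simp add: astep_def act_def read_in_def)
  have s1: "areach w ((P1,[]),1,[]) ((P1,[]),L+1,o1)"
    by (rule sq[where f = out1 and pre = "[]" and post = "[]"]) (auto simp: act_def L_def o1_def)
  have s2: "areach w ((P1,[]),L+1,o1) ((Rw,tail1),L,o1)"
    by (rule areach_step) (simp add: astep_def act_def read_in_def L_def tail1_def)
  have s3: "areach w ((Rw,tail1),L,o1) ((Rw,[]),L,o2)"
    unfolding o2_def by (rule emit) (simp add: L_def)
  have s4: "areach w ((Rw,[]),L,o2) ((Rw,[]),0,o2)"
    by (rule rewind) (simp add: L_def)
  have s5: "areach w ((Rw,[]),0,o2) ((MI,[]),1,o2)"
    by (rule areach_step) (simp add: astep_def act_def read_in_def)
  have s6: "areach w ((MI,[]),1,o2) ((MI,[]),length CI + 1,o3)"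
    by (rule numsI[of w "[]" I "[TSep] @ CF @ [TSep] @ CT @ [TSep]"]) (auto simp: w CI_def o3_def)
  have s7: "areach w ((MI,[]),length CI + 1,o3) ((MF,[]),length CI + 2,o3)"
    by (rule rd[of w CI TSep "CF @ [TSep] @ CT @ [TSep]"]) (auto simp: w act_def)
  have s8: "areach w ((MF,[]),length CI + 2,o3) ((MF,[]),length CI + length CF + 2,o4)"
    by (rule numsF[of w "CI @ [TSep]" F "[TSep] @ CT @ [TSep]"]) (auto simp: w CF_def o4_def)
  have s9: "areach w ((MF,[]),length CI + length CF + 2,o4) ((MT,[]),length CI + length CF + 3,o4)"
    by (rule rd[of w "CI @ [TSep] @ CF" TSep "CT @ [TSep]"]) (auto simp: w act_def)
  have s10: "areach w ((MT,[]),length CI + length CF + 3,o4) ((MT,[]),length CI + length CF + length CT + 3,o5)"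
    by (rule trns[of w "CI @ [TSep] @ CF @ [TSep]" T "[TSep]"]) (auto simp: w CT_def o5_def)
  have s11: "areach w ((MT,[]),length CI + length CF + length CT + 3,o5) ((Halt,[]),L + 1,o5 @ [TSep,TEnd,T1,T0,TEnd])"
    by (rule rd[of w "CI @ [TSep] @ CF @ [TSep] @ CT" TSep "[]"]) (auto simp: w act_def L_def)
  have "areach w ((P0,[]),0,[]) ((Halt,[]),L + 1,o5 @ [TSep,TEnd,T1,T0,TEnd])"
    by (rule areach_trans[OF s0 areach_trans[OF s1 areach_trans[OF s2 areach_trans[OF s3
        areach_trans[OF s4 areach_trans[OF s5 areach_trans[OF s6 areach_trans[OF s7
        areach_trans[OF s8 areach_trans[OF s9 areach_trans[OF s10 s11]]]]]]]]]]])
  then show ?thesis unfolding o5_def o4_def o3_def o2_def o1_def L_def w_def by simp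
qed

lemma out1_digits: "set ds \<subseteq> {T0, T1} \<Longrightarrow> concat (map out1 ds) = ds"
  by (induction ds) (auto simp: out1_def)

lemma out1_nat: "concat (map out1 (enc_nat n :: 'a tok list)) = enc_nat (2*n+1)"
proof -
  have "set (bin n :: 'a tok list) \<subseteq> {T0, T1}" by (rule bin_digits)
  then show ?thesis by (simp add: enc_nat_def out1_digits bin_2n1 bin_2n1' out1_def)
qed

lemma out1_opt: "concat (map out1 (enc_opt x)) = []"
  by (cases x) (simp_all add: enc_opt_def out1_def)

lemma co_nats: "concat (map out1 (concat (map enc_nat I) :: 'a tok list)) = concat (map (\<lambda>n. enc_nat (2*n+1)) I)"
  by (induction I) (simp_all add: out1_nat del: One_nat_def)

lemma co_T: "concat (map out1 (concat (map Tin T) :: 'a tok list)) =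
   concat (map enc_nat (map (\<lambda>n. 2*n+1) (concat (map (\<lambda>(p,_,q). [p,q]) T))))"
proof (induction T)
  case Nil then show ?case by simp
next
  case (Cons tr T)
  obtain p x y q where tr: "tr = (p,(x,y),q)" by (cases tr) auto
  have "concat (map out1 (Tin tr :: 'a tok list)) = enc_nat (Suc (2*p)) @ enc_nat (Suc (2*q))"
    unfolding tr Tin_def by (simp add: out1_opt out1_nat[unfolded One_nat_def] del: One_nat_def)
  then show ?case using Cons tr by simp
qed

lemma out_eq:
  fixes A :: "('a::finite option \<times> 'a option) nfa"
  assumes A: "A = (I,F,T)"
  shows "concat (map out1 (enc_in A)) @ tail1 @ concat (map Iout I) @ concat (map Fout F)
      @ concat (map Tout T) @ [TSep,TEnd,T1,T0,TEnd] = enc_out (gr A) 0 2"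
proof -
  have o1: "concat (map out1 (enc_in A)) = concat (map enc_nat (map (\<lambda>n. 2*n+1) (nums A)))"
    unfolding A enc_in_split nums_def
    by (simp add: out1_def o_def co_nats co_T del: One_nat_def)
  have e1: "concat (map (\<lambda>(p, b, q). enc_nat p @ enc_lab b @ enc_nat q) (map (\<lambda>a. (0, Base a, 0)) alla)) = (BL :: 'a tok list)"
    by (simp add: BL_def enc_nat_def o_def)
  have e2: "concat (map (\<lambda>(p, b, q). enc_nat p @ enc_lab b @ enc_nat q) (map (\<lambda>i. (0, Fresh 0, 2*i+1)) I)) = (concat (map Iout I) :: 'a tok list)"
    by (induction I) (simp_all add: Iout_def enc_nat_def bin_2n1 bin_2n1' del: One_nat_def)
  have e3: "concat (map (\<lambda>(p, b, q). enc_nat p @ enc_lab b @ enc_nat q) (map (\<lambda>f. (2*f+1, Fresh 0, 2)) F)) = (concat (map Fout F) :: 'a tok list)"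
    by (induction F) (simp_all add: Fout_def enc_nat_def bin_2n1 bin_2n1' bin2 del: One_nat_def)
  have e4: "concat (map (\<lambda>(p, b, q). enc_nat p @ enc_lab b @ enc_nat q) (map (\<lambda>(p,xy,q). (2*p+1, pr2 xy, 2*q+1)) T)) = (concat (map Tout T) :: 'a tok list)"
    by (induction T) (auto simp: Tout_def enc_nat_def bin_2n1 bin_2n1' pr2_def del: One_nat_def)
  show ?thesis
    unfolding enc_out_def gr_def gedges_def A fst_conv snd_conv enc_nats_def map_append concat_append
    using o1 e1 e2 e3 e4 unfolding A
    by (simp add: tail1_def enc_nat_def bin2 del: One_nat_def)
qed



definition SS :: "(mode \<times> 'a::finite tok list) set" where
  "SS = UNIV \<times> {xs. length xs \<le> 7 + length (BL :: 'a tok list)}"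

lemma finite_SS: "finite (SS :: (mode \<times> 'a::finite tok list) set)"
proof -
  have "{xs :: 'a tok list. length xs \<le> 7 + length (BL :: 'a tok list)} =
        {xs. set xs \<subseteq> UNIV \<and> length xs \<le> 7 + length (BL :: 'a tok list)}" by simp
  then have "finite {xs :: 'a tok list. length xs \<le> 7 + length (BL :: 'a tok list)}"
    using finite_lists_length_le[OF finite_tok] by simp
  then show ?thesis unfolding SS_def using finite_mode by simp
qed

lemma in_SS: "(m, pd) \<in> (SS :: (mode \<times> 'a::finite tok list) set) \<longleftrightarrow> length pd \<le> 7 + length (BL :: 'a tok list)"
  by (simp add: SS_def)

definition enc :: "mode \<times> 'a::finite tok list \<Rightarrow> nat" where
  "enc = (SOME h. bij_betw h SS {0..<card (SS::(mode \<times> 'a tok list) set)})"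

lemma bij_enc: "bij_betw (enc :: mode \<times> 'a::finite tok list \<Rightarrow> nat) SS {0..<card (SS :: (mode \<times> 'a tok list) set)}"
proof -
  obtain h where "bij_betw h (SS :: (mode \<times> 'a tok list) set) {0..<card (SS :: (mode \<times> 'a tok list) set)}"
    using ex_bij_betw_finite_nat[OF finite_SS] by blast
  then show ?thesis unfolding enc_def
    by (rule someI[where P = "\<lambda>h. bij_betw h (SS :: (mode \<times> 'a tok list) set) {0..<card (SS :: (mode \<times> 'a tok list) set)}"])
qed

definition dec :: "nat \<Rightarrow> mode \<times> 'a::finite tok list" where "dec q = the_inv_into SS enc q"

lemma dec_enc: "\<sigma> \<in> SS \<Longrightarrow> dec (enc \<sigma>) = (\<sigma> :: mode \<times> 'a::finite tok list)"
  unfolding dec_def by (rule the_inv_into_f_f[OF bij_betw_imp_inj_on[OF bij_enc]])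

lemma enc_lt: "\<sigma> \<in> SS \<Longrightarrow> enc (\<sigma> :: mode \<times> 'a::finite tok list) < card (SS :: (mode \<times> 'a tok list) set)"
  using bij_betw_apply[OF bij_enc] by fastforce

lemma dec_SS: "q < card (SS :: (mode \<times> 'a::finite tok list) set) \<Longrightarrow> (dec q :: mode \<times> 'a tok list) \<in> SS"
proof -
  assume q: "q < card (SS :: (mode \<times> 'a::finite tok list) set)"
  have "q \<in> (enc :: mode \<times> 'a tok list \<Rightarrow> nat) ` SS"
    using bij_enc[where 'a='a] q unfolding bij_betw_def by auto
  then show ?thesis unfolding dec_def
    by (rule the_inv_into_into[OF bij_betw_imp_inj_on[OF bij_enc]]) simp
qed

lemma enc_inj: "\<sigma> \<in> SS \<Longrightarrow> \<tau> \<in> SS \<Longrightarrow> enc (\<sigma> :: mode \<times> 'a::finite tok list) = enc \<tau> \<longleftrightarrow> \<sigma> = \<tau>"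
  using bij_betw_imp_inj_on[OF bij_enc] by (auto simp: inj_on_def)

lemma card_SS_pos: "0 < card (SS :: (mode \<times> 'a::finite tok list) set)"
proof -
  have "(P0, []) \<in> (SS :: (mode \<times> 'a::finite tok list) set)" by (simp add: SS_def)
  then show ?thesis using finite_SS card_gt_0_iff by blast
qed

definition delta :: "nat \<Rightarrow> 'a::finite tok option \<Rightarrow> nat \<Rightarrow> nat \<times> int \<times> nat \<times> int \<times> 'a tok option" where
  "delta q a s = (if q < card (SS :: (mode \<times> 'a tok list) set) then
     (case (dec q :: mode \<times> 'a tok list) of (m, pd) \<Rightarrow>
        if pd \<noteq> [] then (enc (m, tl pd), 0, 0, 0, Some (hd pd))
        else if m = Halt then (q, 0, 0, 0, None)
        else (case act m a of (m', dh, pd') \<Rightarrow> (enc (m', pd'), dh, 0, 0, None)))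
   else (0, 0, 0, 0, None))"

definition TM :: "('a::finite tok, 'a tok) tm" where
  "TM = (enc (P0, [] :: 'a tok list), enc (Halt, [] :: 'a tok list), delta)"

definition lift :: "'a::finite aconf \<Rightarrow> 'a tok conf" where
  "lift c = (case c of (\<sigma>, h, out) \<Rightarrow> (enc \<sigma>, h, (\<lambda>_. 0), 0, out))"

lemma SS_astep: "fst c \<in> SS \<Longrightarrow> fst (astep w (c :: 'a::finite aconf)) \<in> SS"
proof -
  assume a: "fst c \<in> SS"
  obtain m pd h out where c: "c = ((m, pd), h, out)" by (cases c) auto
  obtain m' dh pd' where ac: "act m (read_in w h) = (m', dh, pd')" by (cases "act m (read_in w h)") auto
  show ?thesis using a act_len[of m "read_in w h"] ac unfolding c by (auto simp: astep_def SS_def)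
qed

lemma sim:
  assumes "fst c \<in> SS"
  shows "tm_step TM w (lift c) = lift (astep w (c :: 'a::finite aconf))"
proof -
  obtain m pd h out where c: "c = ((m, pd), h, out)" by (cases c) auto
  have mSS: "(m, pd) \<in> SS" using assms c by simp
  have hSS: "(Halt, [] :: 'a tok list) \<in> SS" by (simp add: SS_def)
  have z: "(\<lambda>_. 0::nat)(0 := 0) = (\<lambda>_. 0)" by auto
  show ?thesis
  proof (cases "m = Halt \<and> pd = []")
    case True
    then show ?thesis unfolding c by (simp add: tm_step_def TM_def lift_def astep_def)
  next
    case False
    then have ne: "enc (m, pd) \<noteq> enc (Halt, [] :: 'a tok list)" using enc_inj[OF mSS hSS] by auto
    show ?thesis
    proof (cases "pd = []")
      case True
      have mSS': "(m, []) \<in> (SS :: (mode \<times> 'a tok list) set)" using mSS True by simp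
      obtain m' dh pd' where a: "act m (read_in w h) = (m', dh, pd')" by (cases "act m (read_in w h)") auto
      show ?thesis unfolding c using ne True False a
        by (simp add: tm_step_def TM_def lift_def astep_def delta_def enc_lt[OF mSS'] dec_enc[OF mSS'] z)
    next
      case pF: False
      show ?thesis unfolding c using ne pF
        by (simp add: tm_step_def TM_def lift_def astep_def delta_def enc_lt[OF mSS] dec_enc[OF mSS] z)
    qed
  qed
qed

lemma sim_n: "fst c \<in> SS \<Longrightarrow> (tm_step TM w ^^ n) (lift c) = lift ((astep w ^^ n) (c :: 'a::finite aconf))"
proof (induction n arbitrary: c)
  case 0 then show ?case by simp
next
  case (Suc n)
  have "(tm_step TM w ^^ Suc n) (lift c) = (tm_step TM w ^^ n) (tm_step TM w (lift c))"
    by (simp only: funpow_Suc_right comp_apply)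
  also have "\<dots> = (tm_step TM w ^^ n) (lift (astep w c))" using sim[OF Suc.prems] by simp
  also have "\<dots> = lift ((astep w ^^ n) (astep w c))" using Suc.IH[OF SS_astep[OF Suc.prems]] .
  also have "\<dots> = lift ((astep w ^^ Suc n) c)" by (simp only: funpow_Suc_right comp_apply)
  finally show ?case .
qed

lemma tm_conf_lift: "tm_conf (TM :: ('a::finite tok, 'a tok) tm) w t = lift ((astep w ^^ t) ((P0, []), 0, []))"
proof -
  have "tm_conf (TM :: ('a::finite tok, 'a tok) tm) w t = (tm_step TM w ^^ t) (lift ((P0, []), 0, []))"
    by (simp add: tm_conf_def TM_def lift_def)
  also have "\<dots> = lift ((astep w ^^ t) ((P0, []), 0, []))"
    by (rule sim_n) (simp add: SS_def)
  finally show ?thesis .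
qed

lemma computes: "tm_computes (TM :: ('a::finite tok, 'a tok) tm) (enc_in A) (enc_out (gr A) 0 2)"
proof -
  obtain I F T where A: "A = (I, F, T)" by (cases A) auto
  from arun[OF A] obtain n where
    n: "(astep (enc_in A) ^^ n) ((P0,[]),0,[]) = ((Halt,[]), length (enc_in A) + 1, enc_out (gr A) 0 2)"
    unfolding areach_def out_eq[OF A] by blast
  have "tm_conf (TM :: ('a::finite tok, 'a tok) tm) (enc_in A) n = lift ((astep (enc_in A) ^^ n) ((P0, []), 0, []))"
    by (rule tm_conf_lift)
  then have "tm_conf (TM :: ('a::finite tok, 'a tok) tm) (enc_in A) n =
     (enc (Halt, [] :: 'a tok list), length (enc_in A) + 1, (\<lambda>_. 0), 0, enc_out (gr A) 0 2)"
    unfolding n by (simp add: lift_def)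
  then show ?thesis unfolding tm_computes_def
    by (intro exI[of _ n]) (simp add: TM_def)
qed

lemma delta_dp: "fst (snd (snd (snd (delta q a s)))) = 0"
  by (simp add: delta_def split: prod.splits)

lemma delta_ok: "q < card (SS :: (mode \<times> 'a::finite tok list) set) \<Longrightarrow>
   (case (delta q (a :: 'a tok option) s) of (q', dh, s', dp, _) \<Rightarrow>
      q' < card (SS :: (mode \<times> 'a tok list) set) \<and> s' < card (SS :: (mode \<times> 'a tok list) set) \<and> dh \<in> {-1, 0, 1} \<and> dp \<in> {-1, 0, 1})"
proof -
  assume q: "q < card (SS :: (mode \<times> 'a::finite tok list) set)"
  obtain m pd where d: "(dec q :: mode \<times> 'a tok list) = (m, pd)" by (cases "dec q :: mode \<times> 'a tok list") auto
  have mSS: "(m, pd) \<in> (SS :: (mode \<times> 'a tok list) set)" using dec_SS[OF q] d by simp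
  have tl: "(m, tl pd) \<in> (SS :: (mode \<times> 'a tok list) set)" using mSS by (simp add: SS_def)
  obtain m' dh pd' where a: "act m a = (m', dh, pd')" by (cases "act m a") auto
  have aSS: "(m', pd') \<in> (SS :: (mode \<times> 'a tok list) set)" using act_len[of m a] a by (simp add: SS_def)
  have dh: "dh \<in> {-1, 0, 1}" using act_dh[of m a] a by simp
  show ?thesis using q d a enc_lt[OF tl] enc_lt[OF aSS] dh card_SS_pos[where 'a='a]
    by (simp add: delta_def)
qed

lemma TM_ok: "tm_ok (TM :: ('a::finite tok, 'a tok) tm)"
  unfolding tm_ok_def TM_def
  apply simp
  apply (rule exI[of _ "card (SS :: (mode \<times> 'a tok list) set)"])
  using enc_lt[of "(P0, [] :: 'a tok list)"] enc_lt[of "(Halt, [] :: 'a tok list)"] delta_ok[where 'a='a]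
  by (auto simp: SS_def)

lemma p_zero: "fst (snd (snd (snd (tm_conf (TM :: ('a::finite tok, 'a tok) tm) w t)))) = 0"
  by (simp add: tm_conf_lift lift_def split: prod.splits)

lemma TM_logspace: "logspace (TM :: ('a::finite tok, 'a tok) tm)"
  unfolding logspace_def
  using TM_ok p_zero[where 'a='a]
  by (auto intro!: exI[of _ 0] split: prod.splits) (metis fst_conv snd_conv)



theorem mainTheorem4:
  fixes S :: "('a::finite list \<times> 'a list) set"
  shows "\<exists>(\<phi> :: 'a lab ecrpq) (M :: ('a tok, 'a tok) tm).
           wf_query \<phi> \<and> logspace M \<and>
           (\<forall>A :: ('a option \<times> 'a option) nfa.
              \<exists>G v v'. tm_computes M (enc_in A) (enc_out G v v') \<and>
                wf_graph G \<and> v \<in> set (fst G) \<and> v' \<in> set (fst G) \<and>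
                (sat S \<phi> G v v' \<longleftrightarrow> rel2 A \<inter> S \<noteq> {}))"
proof -
  have "\<forall>A :: ('a option \<times> 'a option) nfa.
              \<exists>G v v'. tm_computes (TM :: ('a tok, 'a tok) tm) (enc_in A) (enc_out G v v') \<and>
                wf_graph G \<and> v \<in> set (fst G) \<and> v' \<in> set (fst G) \<and>
                (sat S phi G v v' \<longleftrightarrow> rel2 A \<inter> S \<noteq> {})"
  proof
    fix A :: "('a option \<times> 'a option) nfa"
    have m: "0 \<in> set (fst (gr A))" "2 \<in> set (fst (gr A))" by (simp_all add: gr_def)
    show "\<exists>G v v'. tm_computes (TM :: ('a tok, 'a tok) tm) (enc_in A) (enc_out G v v') \<and>
                wf_graph G \<and> v \<in> set (fst G) \<and> v' \<in> set (fst G) \<and>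
                (sat S phi G v v' \<longleftrightarrow> rel2 A \<inter> S \<noteq> {})"
      using computes[of A] wf_gr[of A] sat_gr[of S A] m by blast
  qed
  then show ?thesis using wf_phi TM_logspace by blast
qed

end
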